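(* Let $(G_k)_{k\in\mathbb Z}$ be a gibonacci sequence, let $\lambda = G_1^2 - G_0G_2$, and let $F_k$ denote the Fibonacci numbers. For every positive integer $n$ and all integers $t$ and $m$, \begin{equation*} \begin{split} &5\sum_{j = 1}^n (-F_{m - 3})^{n - j} (F_{m + 2})^j G_{j + t - 1} G_{j + t} G_{j + t + 1} G_{j + t + 2} G_{j + t + m}\\ &\qquad = F_{m + 2}^{n + 1} G_{n + t + 1}^5 - (-F_{m - 3})^n F_{m + 2} G_{t + 1}^5 - \lambda^2\left(F_{m + 2}^{n + 1} G_{n + t + 1} - (-F_{m - 3})^n F_{m + 2} G_{t + 1}\right). \end{split} \end{equation*}
   Context: A gibonacci sequence $(G_k)_{k\in\mathbb Z}$ is defined by arbitrary initial values $G_0=a$, $G_1=b$ (numbers, not both zero) and $G_k=G_{k-1}+G_{k-2}$ for all integers $k$. The Fibonacci numbers $F_k$ are the gibonacci sequence with $F_0=0$, $F_1=1$, extended to all integer indices by the same recurrence. The convention $0^0=1$ is used for powers. *)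

theory Defs
  imports "HOL-Analysis.Analysis" "HOL-Number_Theory.Fib"
begin

definition gibonacci :: "(int \<Rightarrow> real) \<Rightarrow> bool" where
  "gibonacci G \<longleftrightarrow> (\<forall>k. G k = G (k - 1) + G (k - 2)) \<and> \<not> (G 0 = 0 \<and> G 1 = 0)"

text \<open>Fibonacci numbers extended to all integer indices by the same recurrence
  (F_{-n} = (-1)^(n+1) F_n).\<close>
definition fibz :: "int \<Rightarrow> real" where
  "fibz k = (if k \<ge> 0 then real (fib (nat k))
             else (-1) ^ (nat (-k) + 1) * real (fib (nat (-k))))"

end

theory Submission
  imports Defs
begin

lemma fibz_nat: "fibz (int n) = real (fib n)"
  by (simp add: fibz_def)

lemma fibz_neg: "fibz (- int n) = (-1) ^ (n + 1) * real (fib n)"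
proof (cases "n = 0")
  case False
  then have "\<not> (- int n \<ge> 0)" "nat (- (- int n)) = n" by auto
  then show ?thesis unfolding fibz_def by simp
qed (simp add: fibz_def)

lemma fibz_rec: "fibz k = fibz (k - 1) + fibz (k - 2)"
proof (cases "k \<ge> 2")
  case True
  define n where "n = nat k - 2"
  have n: "k = int (n + 2)" using True unfolding n_def by simp
  have a: "k - 1 = int (n + 1)" "k - 2 = int n" using n by auto
  have b1: "fibz k = fib (n+2)" by (simp only: n fibz_nat)
  have b2: "fibz (k-1) = fib (n+1)" by (simp only: a(1) fibz_nat)
  have b3: "fibz (k-2) = fib n" by (simp only: a(2) fibz_nat)
  show ?thesis unfolding b1 b2 b3 by (simp add: fib_plus_2)
next
  case False
  then consider "k = 1" | n where "k = - int n"
  proof (cases "k = 1")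
    case False
    with \<open>\<not> k \<ge> 2\<close> have "k = - int (nat (-k))" by simp
    then show ?thesis using that by blast
  qed simp
  then show ?thesis
  proof cases
    case 1
    show ?thesis using 1 fibz_nat[of 1] fibz_nat[of 0] fibz_neg[of 1] by simp
  next
    case 2
    have a: "k - 1 = - int (n+1)" "k - 2 = - int (n+2)" using 2 by auto
    show ?thesis unfolding a unfolding 2 fibz_neg by (simp add: fib_plus_2 algebra_simps)
  qed
qed

lemma fibz_rec2: "fibz (k + 2) = fibz (k + 1) + fibz k"
proof -
  have e: "k + 2 - 1 = k + 1" "k + 2 - 2 = k" by simp_all
  show ?thesis using fibz_rec[of "k+2"] unfolding e .
qed

lemma rec2:
  fixes H :: "int \<Rightarrow> real"
  assumes rec: "\<And>k. H k = H (k - 1) + H (k - 2)"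
  shows "H (k + 2) = H (k + 1) + H k"
proof -
  have e: "k + 2 - 1 = k + 1" "k + 2 - 2 = k" by simp_all
  show ?thesis using rec[of "k+2"] unfolding e .
qed

lemma shift:
  fixes H :: "int \<Rightarrow> real"
  assumes rec: "\<And>k. H k = H (k - 1) + H (k - 2)"
  shows "H (k + m) = fibz m * H (k + 1) + fibz (m - 1) * H k"
proof -
  define P where "P m \<longleftrightarrow> (\<forall>k. H (k + m) = fibz m * H (k + 1) + fibz (m - 1) * H k) \<and>
     (\<forall>k. H (k + m + 1) = fibz (m + 1) * H (k + 1) + fibz m * H k)" for m
  have "P m"
  proof (induct m rule: int_induct[where k=0])
    case base
    have "fibz 0 = 0" "fibz 1 = 1" "fibz (-1) = 1"
      using fibz_nat[of 0] fibz_nat[of 1] fibz_neg[of 1] by auto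
    then show ?case unfolding P_def by simp
  next
    case (step1 i)
    have e1: "\<And>k. H (k + i) = fibz i * H (k + 1) + fibz (i - 1) * H k" using step1(2) unfolding P_def by blast
    have e2: "\<And>k. H (k + i + 1) = fibz (i+1) * H (k + 1) + fibz i * H k" using step1(2) unfolding P_def by blast
    show ?case unfolding P_def
    proof (intro conjI allI)
      fix k show "H (k + (i + 1)) = fibz (i + 1) * H (k + 1) + fibz (i + 1 - 1) * H k"
        using e2[of k] by (simp add: add.assoc)
    next
      fix k
      have r: "H (k + i + 2) = H (k + i + 1) + H (k + i)" by (rule rec2[OF rec])
      have f1: "fibz (i+2) = fibz (i+1) + fibz i" by (rule fibz_rec2)
      have f2: "fibz (i+1) = fibz (i+1-1) + fibz (i + 1 - 2)" by (rule fibz_rec)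
      have e3: "i + 1 - 1 = i" "i + 1 - 2 = i - 1" "k + (i + 1) + 1 = k + i + 2" "i + 1 + 1 = i + 2" by simp_all
      show "H (k + (i + 1) + 1) = fibz (i + 1 + 1) * H (k + 1) + fibz (i + 1) * H k"
        unfolding e3 using r f1 f2[unfolded e3] e1[of k] e2[of k]
        by (simp add: algebra_simps)
    qed
  next
    case (step2 i)
    have e1: "\<And>k. H (k + i) = fibz i * H (k + 1) + fibz (i - 1) * H k" using step2(2) unfolding P_def by blast
    have e2: "\<And>k. H (k + i + 1) = fibz (i+1) * H (k + 1) + fibz i * H k" using step2(2) unfolding P_def by blast
    show ?case unfolding P_def
    proof (intro conjI allI)
      fix k show "H (k + (i - 1) + 1) = fibz (i - 1 + 1) * H (k + 1) + fibz (i - 1) * H k"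
        using e1[of k] by simp
    next
      fix k
      have r: "H (k + (i - 1) + 2) = H (k + (i - 1) + 1) + H (k + (i - 1))" by (rule rec2[OF rec])
      have f1: "fibz (i - 1 + 2) = fibz (i - 1 + 1) + fibz (i - 1)" by (rule fibz_rec2)
      have e4: "i - 1 + 1 - 1 = i - 1" "i - 1 + 1 - 2 = i - 1 - 1" by simp_all
      have f2: "fibz (i - 1 + 1) = fibz (i - 1) + fibz (i - 1 - 1)" using fibz_rec[of "i - 1 + 1"] unfolding e4 .
      have e3: "k + (i - 1) + 2 = k + i + 1" "k + (i - 1) + 1 = k + i" "i - 1 + 2 = i + 1" "i - 1 + 1 = i" by simp_all
      show "H (k + (i - 1)) = fibz (i - 1) * H (k + 1) + fibz (i - 1 - 1) * H k"
        using r[unfolded e3] f1[unfolded e3] f2[unfolded e3] e1[of k] e2[of k]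
        by (simp add: algebra_simps)
    qed
  qed
  then show ?thesis unfolding P_def by blast
qed

lemma qconst:
  fixes H :: "int \<Rightarrow> real"
  assumes rec: "\<And>k. H k = H (k - 1) + H (k - 2)"
  shows "(H (k+1)^2 - H (k+1) * H k - H k ^ 2)^2 = (H 1 ^ 2 - H 0 * H 2)^2"
proof -
  define q where "q k = H (k+1)^2 - H (k+1) * H k - H k ^ 2" for k
  have step: "q (k+1) = - q k" for k
  proof -
    have "H (k+2) = H (k+1) + H k" by (rule rec2[OF rec])
    moreover have "k + 1 + 1 = k + 2" by simp
    ultimately show ?thesis unfolding q_def by (simp add: algebra_simps power2_eq_square)
  qed
  have sq: "(q k)^2 = (q 0)^2" for k
  proof (induct k rule: int_induct[where k=0])
    case base then show ?case by simp
  next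
    case (step1 i) then show ?case using step[of i] by simp
  next
    case (step2 i) then show ?case using step[of "i-1"] by simp
  qed
  have "H (0+2) = H (0+1) + H 0" by (rule rec2[OF rec])
  then have "H 2 = H 1 + H 0" by simp
  then have q0: "q 0 = H 1 ^ 2 - H 0 * H 2" unfolding q_def by (simp add: algebra_simps power2_eq_square)
  have "(q k)^2 = (H 1 ^ 2 - H 0 * H 2)^2" using sq[of k] unfolding q0 .
  then show ?thesis unfolding q_def .
qed

lemma poly_id:
  fixes x y f g :: real
  shows "5 * ((x - y) * y * x * (x + y) * (f * x + g * y)) =
     (2*f+g) * (x ^ 5 - (x^2 - x*y - y^2)^2 * x) - (- (2*g-f)) * (y ^ 5 - (x^2 - x*y - y^2)^2 * y)"
  by algebra

lemma key:
  fixes H :: "int \<Rightarrow> real"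
  assumes rec: "\<And>k. H k = H (k - 1) + H (k - 2)" and L: "L = (H 1 ^ 2 - H 0 * H 2)"
  shows "5 * (H (k - 1) * H k * H (k + 1) * H (k + 2) * H (k + m)) =
     fibz (m+2) * (H (k+1) ^ 5 - L^2 * H (k+1)) - (- fibz (m - 3)) * (H k ^ 5 - L^2 * H k)"
proof -
  define x y f g where "x = H (k+1)" "y = H k" "f = fibz m" "g = fibz (m - 1)"
  have L2: "L^2 = (x^2 - x*y - y^2)^2" unfolding L x_y_f_g_def using qconst[OF rec, of k] by simp
  have h1: "H (k-1) = x - y" using rec[of "k+1"] unfolding x_y_f_g_def by simp
  have h2: "H (k+2) = x + y" using rec2[OF rec, of k] unfolding x_y_f_g_def by simp
  have h3: "H (k+m) = f * x + g * y" using shift[OF rec, of k m] unfolding x_y_f_g_def by simp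
  have fa: "fibz (m+1) = f + g" using fibz_rec[of "m+1"] unfolding x_y_f_g_def by simp
  have fb: "fibz (m+2) = fibz (m+1) + f" using fibz_rec2[of "m"] unfolding x_y_f_g_def by simp
  have fc: "f = g + fibz (m - 2)" using fibz_rec[of "m"] unfolding x_y_f_g_def by simp
  have e: "m - 1 - 1 = m - 2" "m - 1 - 2 = m - 3" by simp_all
  have fd: "g = fibz (m - 2) + fibz (m - 3)" using fibz_rec[of "m - 1"] unfolding x_y_f_g_def e .
  have F2: "fibz (m+2) = 2*f + g" using fa fb by simp
  have F3: "fibz (m - 3) = 2*g - f" using fc fd by simp
  show ?thesis unfolding L2 h1 h2 h3 F2 F3 unfolding x_y_f_g_def[symmetric]
    by (rule poly_id)
qed

theorem proposition2:
  fixes G :: "int \<Rightarrow> real" and n :: nat and t m :: int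
  assumes "gibonacci G" and "n \<ge> 1"
  defines "lam \<equiv> (G 1)^2 - G 0 * G 2"
  shows "5 * (\<Sum>j=1..n. (- fibz (m - 3)) ^ (n - j) * (fibz (m + 2)) ^ j *
            G (int j + t - 1) * G (int j + t) * G (int j + t + 1) * G (int j + t + 2) * G (int j + t + m))
       = fibz (m + 2) ^ (n + 1) * G (int n + t + 1) ^ 5
         - (- fibz (m - 3)) ^ n * fibz (m + 2) * G (t + 1) ^ 5
         - lam^2 * (fibz (m + 2) ^ (n + 1) * G (int n + t + 1)
                  - (- fibz (m - 3)) ^ n * fibz (m + 2) * G (t + 1))"
proof -
  have rec: "\<And>k. G k = G (k - 1) + G (k - 2)" using assms(1) unfolding gibonacci_def by blast
  define a b where "a = - fibz (m - 3)" "b = fibz (m + 2)"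
  define T where "T k = G k ^ 5 - lam^2 * G k" for k
  define P where "P j = G (int j + t - 1) * G (int j + t) * G (int j + t + 1) * G (int j + t + 2) * G (int j + t + m)" for j :: nat
  have K: "5 * (G (k - 1) * G k * G (k + 1) * G (k + 2) * G (k + m)) = b * T (k+1) - a * T k" for k
    unfolding a_b_def T_def using key[OF rec lam_def[THEN meta_eq_to_obj_eq], of k m] by simp
  have main: "5 * (\<Sum>j=1..N. a ^ (N - j) * b ^ j * P j)
       = b ^ (N+1) * T (int N + t + 1) - a ^ N * b * T (t + 1)" for N
  proof (induct N)
    case 0 then show ?case by simp
  next
    case (Suc N)
    have s: "(\<Sum>j=1..Suc N. a ^ (Suc N - j) * b ^ j * P j) =
        a * (\<Sum>j=1..N. a ^ (N - j) * b ^ j * P j) + b ^ Suc N * P (Suc N)"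
    proof -
      have "(\<Sum>j=1..N. a ^ (Suc N - j) * b ^ j * P j) = a * (\<Sum>j=1..N. a ^ (N - j) * b ^ j * P j)"
        unfolding sum_distrib_left
        by (rule sum.cong) (auto simp: Suc_diff_le)
      then show ?thesis by simp
    qed
    have e: "int (Suc N) + t = int N + t + 1" by simp
    have KK: "5 * P (Suc N) = b * T (int (Suc N) + t + 1) - a * T (int N + t + 1)"
      using K[of "int (Suc N) + t"] unfolding P_def e .
    define S where "S = (\<Sum>j=1..N. a ^ (N - j) * b ^ j * P j)"
    define T0 T1 T2 where "T0 = T (t+1)" "T1 = T (int N + t + 1)" "T2 = T (int (Suc N) + t + 1)"
    have IH: "5 * S = b ^ (N+1) * T1 - a ^ N * b * T0" using Suc unfolding S_def T0_T1_T2_def .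
    have KK': "5 * P (Suc N) = b * T2 - a * T1" using KK unfolding T0_T1_T2_def .
    have "5 * (a * S + b ^ Suc N * P (Suc N)) = a * (5 * S) + b ^ Suc N * (5 * P (Suc N))"
      by (simp add: algebra_simps)
    also have "\<dots> = a * (b ^ (N+1) * T1 - a ^ N * b * T0) + b ^ Suc N * (b * T2 - a * T1)"
      unfolding IH KK' ..
    also have "\<dots> = b ^ (Suc N + 1) * T2 - a ^ Suc N * b * T0"
      by (simp add: algebra_simps)
    finally show ?case unfolding s S_def T0_T1_T2_def .
  qed
  have cong: "(\<Sum>j=1..n. (- fibz (m - 3)) ^ (n - j) * (fibz (m + 2)) ^ j *
            G (int j + t - 1) * G (int j + t) * G (int j + t + 1) * G (int j + t + 2) * G (int j + t + m))
     = (\<Sum>j=1..n. a ^ (n - j) * b ^ j * P j)"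
    unfolding a_b_def P_def by (simp add: mult.assoc)
  show ?thesis unfolding cong main unfolding a_b_def T_def
    by (simp add: algebra_simps)
qed

end
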